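(* Let $I\subseteq(0,1)$ be an interval forecast, and let $(D_i)_{i\in\mathbb N_0}$ be non-negative real supermartingale multipliers for $I$ such that $(D_i^{\circledcirc})_{i\in\mathbb N_0}$ is a recursive enumeration of lower semicomputable test supermartingales for $I$ (i.e. there is a recursive $q:\mathbb N_0\times\mathbb S\times\mathbb N_0\to\mathbb Q$ with $q(i,s,n+1)\ge q(i,s,n)$ and $\lim_nq(i,s,n)=D_i^{\circledcirc}(s)$ for all $i,s,n$). Then the process $T(s)=\sum_{i=0}^\infty2^{-i-1}D_i^{\circledcirc}(s)$, $s\in\mathbb S$, is a lower semicomputable test supermartingale for $I$.
   Context: $\mathcal X=\{0,1\}$, $\mathbb S=\bigcup_{n\ge0}\mathcal X^n$ (finite binary strings), $\square$ the empty string, $sx$ concatenation. Interval forecasts are nonempty closed intervals $I\subseteq[0,1]$; $\overline E_I(f)=\max_{p\in I}[pf(1)+(1-p)f(0)]$. A real multiplier process $D$ maps $\mathbb S$ to gambles $\mathcal X\to\mathbb R$; it is a supermartingale multiplier for $I$ if $\overline E_I(D(s))\le1$ for all $s$; it generates $D^{\circledcirc}(x_1,\dots,x_n)=\prod_{k=0}^{n-1}D(x_{1:k})(x_{k+1})$. A test supermartingale for $I$ is $T:\mathbb S\to\mathbb R_{\ge0}$ with $T(\square)=1$ and $\overline E_I(T(s\,\cdot)-T(s))\le0$ for all $s$; it is lower semicomputable if there is a recursive $r:\mathbb S\times\mathbb N_0\to\mathbb Q$ non-decreasing in $n$ with $T(s)=\lim_nr(s,n)$. *)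

theory Defs
  imports Complex_Main "HOL-Library.Nat_Bijection"
begin

text \<open>rec_fn n f: f, as a function on argument lists of length n, is total recursive.
 Only the values on lists of length n matter (closure rule ext).\<close>

inductive rec_fn :: "nat \<Rightarrow> (nat list \<Rightarrow> nat) \<Rightarrow> bool" where
  zero: "rec_fn n (\<lambda>_. 0)"
| succ: "rec_fn 1 (\<lambda>xs. Suc (hd xs))"
| proj: "i < n \<Longrightarrow> rec_fn n (\<lambda>xs. xs ! i)"
| comp: "rec_fn m f \<Longrightarrow> length gs = m \<Longrightarrow> (\<forall>g\<in>set gs. rec_fn n g)
         \<Longrightarrow> rec_fn n (\<lambda>xs. f (map (\<lambda>g. g xs) gs))"
| prim: "rec_fn n f \<Longrightarrow> rec_fn (Suc (Suc n)) g
         \<Longrightarrow> rec_fn (Suc n) (\<lambda>xs. rec_nat (f (tl xs)) (\<lambda>k r. g (r # k # tl xs)) (hd xs))"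
| mu: "rec_fn (Suc n) g \<Longrightarrow> (\<forall>xs. length xs = n \<longrightarrow> (\<exists>y. g (y # xs) = 0))
         \<Longrightarrow> rec_fn n (\<lambda>xs. LEAST y. g (y # xs) = 0)"
| ext: "rec_fn n f \<Longrightarrow> (\<forall>xs. length xs = n \<longrightarrow> f xs = g xs) \<Longrightarrow> rec_fn n g"

text \<open>Binary strings: bool list, True = 1, False = 0; [] is the empty string.\<close>

definition str_code :: "bool list \<Rightarrow> nat" where
  "str_code s = list_encode (map (\<lambda>b. if b then 1 else 0) s)"

definition rat_code :: "rat \<Rightarrow> nat" where
  "rat_code q = prod_encode (int_encode (fst (quotient_of q)), nat (snd (quotient_of q)))"

definition recursive_SN_Q :: "(bool list \<Rightarrow> nat \<Rightarrow> rat) \<Rightarrow> bool" where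
  "recursive_SN_Q r \<longleftrightarrow>
     (\<exists>g. rec_fn 2 g \<and> (\<forall>s n. g [str_code s, n] = rat_code (r s n)))"

definition recursive_NSN_Q :: "(nat \<Rightarrow> bool list \<Rightarrow> nat \<Rightarrow> rat) \<Rightarrow> bool" where
  "recursive_NSN_Q q \<longleftrightarrow>
     (\<exists>g. rec_fn 3 g \<and> (\<forall>i s n. g [i, str_code s, n] = rat_code (q i s n)))"

definition interval_forecast :: "real set \<Rightarrow> bool" where
  "interval_forecast I \<longleftrightarrow> (\<exists>a b. a \<le> b \<and> 0 \<le> a \<and> b \<le> 1 \<and> I = {a..b})"

definition upper_exp :: "real set \<Rightarrow> (bool \<Rightarrow> real) \<Rightarrow> real" where
  "upper_exp I f = (SUP p\<in>I. p * f True + (1 - p) * f False)"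

definition supermartingale_multiplier :: "real set \<Rightarrow> (bool list \<Rightarrow> bool \<Rightarrow> real) \<Rightarrow> bool" where
  "supermartingale_multiplier I D \<longleftrightarrow> (\<forall>s. upper_exp I (D s) \<le> 1)"

definition gen :: "(bool list \<Rightarrow> bool \<Rightarrow> real) \<Rightarrow> bool list \<Rightarrow> real" where
  "gen D s = (\<Prod>k<length s. D (take k s) (s ! k))"

definition test_supermartingale :: "real set \<Rightarrow> (bool list \<Rightarrow> real) \<Rightarrow> bool" where
  "test_supermartingale I T \<longleftrightarrow>
     (\<forall>s. T s \<ge> 0) \<and> T [] = 1 \<and> (\<forall>s. upper_exp I (\<lambda>x. T (s @ [x]) - T s) \<le> 0)"

definition lower_semicomputable :: "(bool list \<Rightarrow> real) \<Rightarrow> bool" where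
  "lower_semicomputable T \<longleftrightarrow>
     (\<exists>r. recursive_SN_Q r \<and> (\<forall>s n. r s n \<le> r s (Suc n)) \<and>
          (\<forall>s. (\<lambda>n. real_of_rat (r s n)) \<longlonglongrightarrow> T s))"

end

theory Submission
  imports Defs
begin


lemma rf_const: "rec_fn n (\<lambda>_. c)"
proof (induction c)
  case 0 then show ?case by (rule zero)
next
  case (Suc c)
  have "rec_fn n (\<lambda>xs. (\<lambda>ys. Suc (hd ys)) (map (\<lambda>g. g xs) [\<lambda>_. c]))"
    by (rule comp[OF succ]) (auto intro: Suc)
  then show ?case by simp
qed

lemma rf_proj: "i < n \<Longrightarrow> rec_fn n (\<lambda>xs. xs ! i)"
  by (rule proj)

lemma rf_comp1: "rec_fn 1 h \<Longrightarrow> rec_fn n f \<Longrightarrow> rec_fn n (\<lambda>xs. h [f xs])"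
proof -
  assume a: "rec_fn 1 h" "rec_fn n f"
  have "rec_fn n (\<lambda>xs. h (map (\<lambda>g. g xs) [f]))"
    by (rule comp[OF a(1)]) (use a in auto)
  then show ?thesis by simp
qed

lemma rf_comp2: "rec_fn 2 h \<Longrightarrow> rec_fn n f \<Longrightarrow> rec_fn n g \<Longrightarrow> rec_fn n (\<lambda>xs. h [f xs, g xs])"
proof -
  assume a: "rec_fn 2 h" "rec_fn n f" "rec_fn n g"
  have "rec_fn n (\<lambda>xs. h (map (\<lambda>g. g xs) [f, g]))"
    by (rule comp[OF a(1)]) (use a in auto)
  then show ?thesis by simp
qed

lemma rf_comp3: "rec_fn 3 h \<Longrightarrow> rec_fn n f \<Longrightarrow> rec_fn n g \<Longrightarrow> rec_fn n k \<Longrightarrow> rec_fn n (\<lambda>xs. h [f xs, g xs, k xs])"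
proof -
  assume a: "rec_fn 3 h" "rec_fn n f" "rec_fn n g" "rec_fn n k"
  have "rec_fn n (\<lambda>xs. h (map (\<lambda>g. g xs) [f, g, k]))"
    by (rule comp[OF a(1)]) (use a in auto)
  then show ?thesis by simp
qed

lemma rf_succ: "rec_fn n f \<Longrightarrow> rec_fn n (\<lambda>xs. Suc (f xs))"
  using rf_comp1[OF succ] by simp

lemma len1: "length xs = Suc 0 \<Longrightarrow> xs = [xs!0]"
  by (cases xs) auto
lemma len2: "length xs = 2 \<Longrightarrow> xs = [xs!0, xs!1]"
  by (cases xs; cases "tl xs") auto
lemma len3: "length xs = 3 \<Longrightarrow> xs = [xs!0, xs!1, xs!2]"
  by (cases xs; cases "tl xs"; cases "tl (tl xs)") (auto simp: numeral_eq_Suc)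

lemma rf_ext: "rec_fn n f \<Longrightarrow> n = m \<Longrightarrow> (\<And>xs. length xs = m \<Longrightarrow> f xs = g xs) \<Longrightarrow> rec_fn m g"
  using ext by blast

lemma rec_add: "rec_nat y (\<lambda>k r. Suc r) x = x + y"
  by (induction x) auto
lemma rec_mult: "rec_nat 0 (\<lambda>k r. r + y) x = x * (y::nat)"
  by (induction x) auto
lemma rec_pred: "rec_nat 0 (\<lambda>k r. k) x = x - (1::nat)"
  by (induction x) auto
lemma rec_tsub: "rec_nat y (\<lambda>k r. r - Suc 0) x = y - (x::nat)"
  by (induction x) auto
lemma rec_pow: "rec_nat (Suc 0) (\<lambda>k r. r + r) x = (2::nat) ^ x"
  by (induction x) auto

lemma rf_add2: "rec_fn 2 (\<lambda>xs. xs!0 + xs!1)"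
proof -
  have "rec_fn (Suc 1) (\<lambda>xs. rec_nat ((\<lambda>ys. ys!0) (tl xs)) (\<lambda>k r. (\<lambda>ys. Suc (ys!0)) (r # k # tl xs)) (hd xs))"
    by (rule prim) (auto intro: proj rf_succ)
  then show ?thesis
  proof (rule rf_ext)
    fix xs :: "nat list" assume "length xs = 2"
    from len2[OF this] obtain a b where "xs = [a,b]" by metis
    then show "rec_nat (tl xs ! 0) (\<lambda>k r. Suc ((r # k # tl xs) ! 0)) (hd xs) = xs!0 + xs!1"
      by (simp add: rec_add)
  qed simp
qed

lemma rf_add: "rec_fn n f \<Longrightarrow> rec_fn n g \<Longrightarrow> rec_fn n (\<lambda>xs. f xs + g xs)"
  using rf_comp2[OF rf_add2] by simp

lemma rf_mult2: "rec_fn 2 (\<lambda>xs. xs!0 * xs!1)"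
proof -
  have "rec_fn (Suc 1) (\<lambda>xs. rec_nat ((\<lambda>ys. 0) (tl xs)) (\<lambda>k r. (\<lambda>ys. ys!0 + ys!2) (r # k # tl xs)) (hd xs))"
    by (rule prim[OF zero]) (intro rf_add proj; simp)
  then show ?thesis
  proof (rule rf_ext)
    fix xs :: "nat list" assume "length xs = 2"
    from len2[OF this] obtain a b where "xs = [a,b]" by metis
    then show "rec_nat ((\<lambda>ys. 0) (tl xs)) (\<lambda>k r. (\<lambda>ys. ys!0 + ys!2) (r # k # tl xs)) (hd xs) = xs!0 * xs!1"
      by (simp add: rec_mult)
  qed simp
qed

lemma rf_pred1: "rec_fn 1 (\<lambda>xs. xs!0 - 1)"
proof -
  have "rec_fn (Suc 0) (\<lambda>xs. rec_nat ((\<lambda>ys. 0) (tl xs)) (\<lambda>k r. (\<lambda>ys. ys!1) (r # k # tl xs)) (hd xs))"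
    by (rule prim[OF zero]) (rule proj; simp)
  then show ?thesis
  proof (rule rf_ext)
    fix xs :: "nat list" assume "length xs = 1"
    from len1[of xs] this obtain a where "xs = [a]" by auto
    then show "rec_nat ((\<lambda>ys. 0) (tl xs)) (\<lambda>k r. (\<lambda>ys. ys!1) (r # k # tl xs)) (hd xs) = xs!0 - 1"
      by (simp add: rec_pred)
  qed simp
qed

lemma rf_tsubr: "rec_fn 2 (\<lambda>xs. xs!1 - xs!0)"
proof -
  have "rec_fn (Suc 1) (\<lambda>xs. rec_nat ((\<lambda>ys. ys!0) (tl xs)) (\<lambda>k r. (\<lambda>ys. ys!0 - 1) (r # k # tl xs)) (hd xs))"
    by (rule prim[OF proj]) (simp, rule rf_ext[OF rf_comp1[OF rf_pred1 proj]], auto)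
  then show ?thesis
  proof (rule rf_ext)
    fix xs :: "nat list" assume "length xs = 2"
    from len2[OF this] obtain a b where "xs = [a,b]" by metis
    then show "rec_nat ((\<lambda>ys. ys!0) (tl xs)) (\<lambda>k r. (\<lambda>ys. ys!0 - 1) (r # k # tl xs)) (hd xs) = xs!1 - xs!0"
      by (simp add: rec_tsub)
  qed simp
qed

lemma rf_pow1: "rec_fn 1 (\<lambda>xs. 2 ^ (xs!0))"
proof -
  have "rec_fn (Suc 0) (\<lambda>xs. rec_nat ((\<lambda>ys. 1) (tl xs)) (\<lambda>k r. (\<lambda>ys. ys!0 + ys!0) (r # k # tl xs)) (hd xs))"
    by (rule prim[OF rf_const]) (intro rf_add proj; simp)
  then show ?thesis
  proof (rule rf_ext)
    fix xs :: "nat list" assume "length xs = 1"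
    from len1[of xs] this obtain a where "xs = [a]" by auto
    then show "rec_nat ((\<lambda>ys. 1) (tl xs)) (\<lambda>k r. (\<lambda>ys. ys!0 + ys!0) (r # k # tl xs)) (hd xs) = 2 ^ (xs!0)"
      by (simp add: rec_pow)
  qed simp
qed

lemma rf_mult: "rec_fn n f \<Longrightarrow> rec_fn n g \<Longrightarrow> rec_fn n (\<lambda>xs. f xs * g xs)"
  using rf_comp2[OF rf_mult2] by simp
lemma rf_sub: "rec_fn n f \<Longrightarrow> rec_fn n g \<Longrightarrow> rec_fn n (\<lambda>xs. f xs - g xs)"
  using rf_comp2[OF rf_tsubr, of n g f] by simp
lemma rf_pow2: "rec_fn n f \<Longrightarrow> rec_fn n (\<lambda>xs. 2 ^ f xs)"
  using rf_comp1[OF rf_pow1] by simp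

lemma rf_mu: "rec_fn (Suc n) g \<Longrightarrow> (\<And>xs. length xs = n \<Longrightarrow> \<exists>y. g (y # xs) = 0)
         \<Longrightarrow> rec_fn n (\<lambda>xs. LEAST y. g (y # xs) = 0)"
  using mu by blast

definition sg :: "nat \<Rightarrow> nat" where "sg d = 1 - (1 - d)"

lemma div_least: "(LEAST y. (x+1) * sg d - d * (y+1) = 0) = x div (d::nat)"
proof (cases "d = 0")
  case True then show ?thesis by (simp add: sg_def)
next
  case False
  then have sg: "sg d = 1" by (simp add: sg_def)
  have iff: "((x+1) * sg d - d * (y+1) = 0) \<longleftrightarrow> x div d \<le> y" for y
  proof -
    have "((x+1) * sg d - d * (y+1) = 0) \<longleftrightarrow> x < (y+1) * d" using sg by (simp add: algebra_simps Suc_le_eq)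
    also have "\<dots> \<longleftrightarrow> x div d < y + 1" using False by (simp add: div_less_iff_less_mult)
    finally show ?thesis by (metis Suc_eq_plus1 less_Suc_eq_le)
  qed
  show ?thesis unfolding iff by (rule Least_equality) auto
qed

lemma rf_div2: "rec_fn 2 (\<lambda>xs. xs!0 div xs!1)"
proof -
  have "rec_fn 2 (\<lambda>xs. LEAST y. (\<lambda>ys. (ys!1 + 1) * (1 - (1 - ys!2)) - ys!2 * (ys!0 + 1)) (y # xs) = 0)"
  proof (rule rf_mu)
    show "rec_fn (Suc 2) (\<lambda>ys. (ys!1 + 1) * (1 - (1 - ys!2)) - ys!2 * (ys!0 + 1))"
      by (intro rf_add rf_mult rf_sub rf_const proj) auto
    fix xs :: "nat list" assume "length xs = 2"
    from len2[OF this] obtain a b where "xs = [a,b]" by metis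
    then show "\<exists>y. (\<lambda>ys. (ys!1 + 1) * (1 - (1 - ys!2)) - ys!2 * (ys!0 + 1)) (y # xs) = 0"
      by (intro exI[of _ a]) (cases b, auto)
  qed
  then show ?thesis
  proof (rule rf_ext)
    fix xs :: "nat list" assume "length xs = 2"
    from len2[OF this] obtain a b where "xs = [a,b]" by metis
    then show "(LEAST y. (\<lambda>ys. (ys!1 + 1) * (1 - (1 - ys!2)) - ys!2 * (ys!0 + 1)) (y # xs) = 0) = xs!0 div xs!1"
      using div_least[of a b] by (simp add: sg_def)
  qed simp
qed

lemma rf_div: "rec_fn n f \<Longrightarrow> rec_fn n g \<Longrightarrow> rec_fn n (\<lambda>xs. f xs div g xs)"
  using rf_comp2[OF rf_div2] by simp
lemma rf_mod: "rec_fn n f \<Longrightarrow> rec_fn n g \<Longrightarrow> rec_fn n (\<lambda>xs. f xs mod g xs)"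
proof -
  assume a: "rec_fn n f" "rec_fn n g"
  have "rec_fn n (\<lambda>xs. f xs - g xs * (f xs div g xs))"
    by (intro rf_sub rf_mult rf_div a)
  then show ?thesis by (simp add: minus_mult_div_eq_mod)
qed



definition mgcd :: "nat \<Rightarrow> nat \<Rightarrow> nat" where
  "mgcd N M = M - (LEAST y. (N mod (M - y) + M mod (M - y)) * (M - y) = 0)"

lemma mgcd_eq: assumes "M > 0" shows "mgcd N M = gcd N M"
proof -
  let ?P = "\<lambda>y. (N mod (M - y) + M mod (M - y)) * (M - y) = 0"
  define d where "d = gcd N M"
  have dpos: "d > 0" using assms by (simp add: d_def)
  have dle: "d \<le> M" using assms by (simp add: d_def gcd_le2_nat)
  have "(LEAST y. ?P y) = M - d"
  proof (rule Least_equality)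
    have "M - (M - d) = d" using dle by simp
    then show "?P (M - d)" by (simp add: d_def)
  next
    fix y assume P: "?P y"
    show "M - d \<le> y"
    proof (cases "M \<le> y")
      case True then show ?thesis by simp
    next
      case False
      then have "M - y > 0" by simp
      with P have "(M - y) dvd N" "(M - y) dvd M" by (auto simp: mod_eq_0_iff_dvd)
      then have "(M - y) dvd d" by (simp add: d_def)
      then have "M - y \<le> d" using dpos by (simp add: dvd_imp_le)
      then show ?thesis by simp
    qed
  qed
  then show ?thesis using dle by (simp add: mgcd_def d_def)
qed

lemma rf_mgcd2: "rec_fn 2 (\<lambda>xs. mgcd (xs!0) (xs!1))"
proof -
  have m: "rec_fn 2 (\<lambda>xs. LEAST y. (\<lambda>ys. (ys!1 mod (ys!2 - ys!0) + ys!2 mod (ys!2 - ys!0)) * (ys!2 - ys!0)) (y # xs) = 0)"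
  proof (rule rf_mu)
    show "rec_fn (Suc 2) (\<lambda>ys. (ys!1 mod (ys!2 - ys!0) + ys!2 mod (ys!2 - ys!0)) * (ys!2 - ys!0))"
      by (intro rf_add rf_mult rf_sub rf_mod proj) auto
    fix xs :: "nat list" assume "length xs = 2"
    from len2[OF this] obtain a b where "xs = [a,b]" by metis
    then show "\<exists>y. (\<lambda>ys. (ys!1 mod (ys!2 - ys!0) + ys!2 mod (ys!2 - ys!0)) * (ys!2 - ys!0)) (y # xs) = 0"
      by (intro exI[of _ b]) simp
  qed
  have "rec_fn 2 (\<lambda>xs. xs!1 - (LEAST y. (\<lambda>ys. (ys!1 mod (ys!2 - ys!0) + ys!2 mod (ys!2 - ys!0)) * (ys!2 - ys!0)) (y # xs) = 0))"
    by (intro rf_sub m proj) simp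
  then show ?thesis
  proof (rule rf_ext)
    fix xs :: "nat list" assume "length xs = 2"
    from len2[OF this] obtain a b where "xs = [a,b]" by metis
    then show "xs!1 - (LEAST y. (\<lambda>ys. (ys!1 mod (ys!2 - ys!0) + ys!2 mod (ys!2 - ys!0)) * (ys!2 - ys!0)) (y # xs) = 0) = mgcd (xs!0) (xs!1)"
      by (simp add: mgcd_def)
  qed simp
qed

lemma rf_mgcd: "rec_fn n f \<Longrightarrow> rec_fn n g \<Longrightarrow> rec_fn n (\<lambda>xs. mgcd (f xs) (g xs))"
  using rf_comp2[OF rf_mgcd2] by simp

lemma rf_triangle: "rec_fn n f \<Longrightarrow> rec_fn n (\<lambda>xs. triangle (f xs))"
  unfolding triangle_def by (intro rf_div rf_mult rf_succ rf_const)

definition pk :: "nat \<Rightarrow> nat" where "pk c = (LEAST k. (c+1) - triangle (Suc k) = 0)"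
definition pfst :: "nat \<Rightarrow> nat" where "pfst c = c - triangle (pk c)"
definition psnd :: "nat \<Rightarrow> nat" where "psnd c = pk c - pfst c"

lemma triangle_ge: "k \<le> triangle k"
  by (induction k) auto

lemma rf_pk1: "rec_fn 1 (\<lambda>xs. pk (xs!0))"
proof -
  have m: "rec_fn 1 (\<lambda>xs. LEAST y. (\<lambda>ys. (ys!1 + 1) - triangle (Suc (ys!0))) (y # xs) = 0)"
  proof (rule rf_mu)
    show "rec_fn (Suc 1) (\<lambda>ys. (ys!1 + 1) - triangle (Suc (ys!0)))"
      by (intro rf_add rf_sub rf_triangle rf_succ rf_const proj) auto
    fix xs :: "nat list" assume "length xs = 1"
    from len1[of xs] this obtain a where "xs = [a]" by auto
    then show "\<exists>y. (\<lambda>ys. (ys!1 + 1) - triangle (Suc (ys!0))) (y # xs) = 0"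
      using triangle_ge[of a] by (intro exI[of _ a]) simp
  qed
  then show ?thesis
  proof (rule rf_ext)
    fix xs :: "nat list" assume "length xs = 1"
    from len1[of xs] this obtain a where "xs = [a]" by auto
    then show "(LEAST y. (\<lambda>ys. (ys!1 + 1) - triangle (Suc (ys!0))) (y # xs) = 0) = pk (xs!0)"
      by (simp add: pk_def)
  qed simp
qed

lemma rf_pk: "rec_fn n f \<Longrightarrow> rec_fn n (\<lambda>xs. pk (f xs))"
  using rf_comp1[OF rf_pk1] by simp
lemma rf_pfst: "rec_fn n f \<Longrightarrow> rec_fn n (\<lambda>xs. pfst (f xs))"
  unfolding pfst_def by (intro rf_sub rf_triangle rf_pk)
lemma rf_psnd: "rec_fn n f \<Longrightarrow> rec_fn n (\<lambda>xs. psnd (f xs))"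
  unfolding psnd_def by (intro rf_sub rf_pfst rf_pk)

lemma prod_decode_p: "prod_decode c = (pfst c, psnd c)"
proof -
  let ?P = "\<lambda>k. (c+1) - triangle (Suc k) = 0"
  have ex: "?P c" using triangle_ge[of c] by simp
  have P: "?P (pk c)" unfolding pk_def using ex by (rule LeastI)
  have lo: "triangle (pk c) \<le> c"
  proof (cases "pk c")
    case 0 then show ?thesis by simp
  next
    case (Suc j)
    have "\<not> ?P j"
    proof
      assume "?P j"
      then have "pk c \<le> j" unfolding pk_def by (rule Least_le)
      with Suc show False by simp
    qed
    then show ?thesis using Suc by simp
  qed
  have hi: "c < triangle (Suc (pk c))" using P by simp
  have "pfst c \<le> pk c" using lo hi by (simp add: pfst_def)
  then have "prod_encode (pfst c, psnd c) = c"
    using lo by (simp add: prod_encode_def psnd_def pfst_def)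
  then show ?thesis by (metis prod_encode_inverse)
qed

definition xp :: "nat \<Rightarrow> nat" where "xp a = (a div 2) * (1 - a mod 2)"

lemma rf_xp: "rec_fn n f \<Longrightarrow> rec_fn n (\<lambda>xs. xp (f xs))"
  unfolding xp_def by (intro rf_div rf_mult rf_sub rf_mod rf_const)

lemma xp_int_encode: "xp (int_encode z) = nat (max 0 z)"
  by (auto simp: xp_def int_encode_def sum_encode_def)

definition code2 :: "nat \<Rightarrow> nat \<Rightarrow> nat" where
  "code2 N M = prod_encode (2 * (N div mgcd N M), M div mgcd N M)"

lemma rf_code2: "rec_fn n f \<Longrightarrow> rec_fn n g \<Longrightarrow> rec_fn n (\<lambda>xs. code2 (f xs) (g xs))"
  unfolding code2_def prod_encode_def split
  by (intro rf_add rf_triangle rf_mult rf_div rf_mgcd rf_const)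

lemma code2_correct: assumes "M > 0" shows "code2 N M = rat_code (of_nat N / of_nat M)"
proof -
  have "of_nat N / of_nat M = Fract (int N) (int M)" by (simp add: Fract_of_int_quotient)
  then have "quotient_of (of_nat N / of_nat M) = (int N div int (gcd N M), int M div int (gcd N M))"
    using assms by (simp add: quotient_of_Fract normalize_def gcd_int_int_eq Let_def)
  also have "\<dots> = (int (N div gcd N M), int (M div gcd N M))" by (simp add: zdiv_int)
  finally show ?thesis using assms
    by (simp add: rat_code_def code2_def mgcd_eq int_encode_def sum_encode_def)
qed



definition cw :: "(nat list \<Rightarrow> nat) \<Rightarrow> nat list \<Rightarrow> nat" where
  "cw G xs = psnd (G [xs!0, xs!1, xs!2]) * 2 ^ (xs!0 + 1)"
definition cx :: "(nat list \<Rightarrow> nat) \<Rightarrow> nat list \<Rightarrow> nat" where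
  "cx G xs = xp (pfst (G [xs!0, xs!1, xs!2]))"
definition cM :: "(nat list \<Rightarrow> nat) \<Rightarrow> nat list \<Rightarrow> nat" where
  "cM G xs = rec_nat 1 (\<lambda>k r. r * cw G [k, xs!1, xs!2]) (xs!0)"
definition cN :: "(nat list \<Rightarrow> nat) \<Rightarrow> nat list \<Rightarrow> nat" where
  "cN G xs = rec_nat 0 (\<lambda>k r. r * cw G [k, xs!1, xs!2] + cx G [k, xs!1, xs!2] * cM G [k, xs!1, xs!2]) (xs!0)"
definition cfin :: "(nat list \<Rightarrow> nat) \<Rightarrow> nat list \<Rightarrow> nat" where
  "cfin G xs = code2 (cN G [xs!1, xs!0, xs!1]) (cM G [xs!1, xs!0, xs!1])"

lemma rf_cw: "rec_fn 3 G \<Longrightarrow> rec_fn 3 (cw G)"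
  unfolding cw_def by (intro rf_mult rf_psnd rf_comp3[of G] rf_pow2 rf_add rf_const proj) auto
lemma rf_cx: "rec_fn 3 G \<Longrightarrow> rec_fn 3 (cx G)"
  unfolding cx_def by (intro rf_xp rf_pfst rf_comp3[of G] proj) auto

lemma rf_cM: assumes G: "rec_fn 3 G" shows "rec_fn 3 (cM G)"
proof -
  have g: "rec_fn (Suc (Suc 2)) (\<lambda>ys. ys!0 * cw G [ys!1, ys!2, ys!3])"
    by (intro rf_mult rf_comp3[OF rf_cw[OF G]] proj) auto
  have "rec_fn (Suc 2) (\<lambda>xs. rec_nat ((\<lambda>ys. 1) (tl xs)) (\<lambda>k r. (\<lambda>ys. ys!0 * cw G [ys!1, ys!2, ys!3]) (r # k # tl xs)) (hd xs))"
    by (rule prim[OF rf_const g])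
  then show ?thesis
  proof (rule rf_ext)
    fix xs :: "nat list" assume "length xs = 3"
    from len3[OF this] obtain a b c where "xs = [a,b,c]" by metis
    then show "rec_nat ((\<lambda>ys. 1) (tl xs)) (\<lambda>k r. (\<lambda>ys. ys!0 * cw G [ys!1, ys!2, ys!3]) (r # k # tl xs)) (hd xs) = cM G xs"
      by (simp add: cM_def)
  qed simp
qed

lemma rf_cN: assumes G: "rec_fn 3 G" shows "rec_fn 3 (cN G)"
proof -
  have g: "rec_fn (Suc (Suc 2)) (\<lambda>ys. ys!0 * cw G [ys!1, ys!2, ys!3] + cx G [ys!1, ys!2, ys!3] * cM G [ys!1, ys!2, ys!3])"
    by (intro rf_add rf_mult rf_comp3[OF rf_cw[OF G]] rf_comp3[OF rf_cx[OF G]] rf_comp3[OF rf_cM[OF G]] proj) auto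
  have "rec_fn (Suc 2) (\<lambda>xs. rec_nat ((\<lambda>ys. 0) (tl xs)) (\<lambda>k r. (\<lambda>ys. ys!0 * cw G [ys!1, ys!2, ys!3] + cx G [ys!1, ys!2, ys!3] * cM G [ys!1, ys!2, ys!3]) (r # k # tl xs)) (hd xs))"
    by (rule prim[OF rf_const g])
  then show ?thesis
  proof (rule rf_ext)
    fix xs :: "nat list" assume "length xs = 3"
    from len3[OF this] obtain a b c where "xs = [a,b,c]" by metis
    then show "rec_nat ((\<lambda>ys. 0) (tl xs)) (\<lambda>k r. (\<lambda>ys. ys!0 * cw G [ys!1, ys!2, ys!3] + cx G [ys!1, ys!2, ys!3] * cM G [ys!1, ys!2, ys!3]) (r # k # tl xs)) (hd xs) = cN G xs"
      by (simp add: cN_def)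
  qed simp
qed

lemma rf_cfin: assumes G: "rec_fn 3 G" shows "rec_fn 2 (cfin G)"
  unfolding cfin_def
  by (intro rf_code2 rf_comp3[OF rf_cN[OF G]] rf_comp3[OF rf_cM[OF G]] proj) auto

lemma prod_decode_rat_code:
  "pfst (rat_code x) = int_encode (fst (quotient_of x)) \<and> psnd (rat_code x) = nat (snd (quotient_of x))"
  using prod_decode_p[of "rat_code x"] by (simp add: rat_code_def)

lemma cw_cx:
  assumes hG: "G [i, sc, n] = rat_code x"
  shows "cw G [i, sc, n] > 0 \<and> of_nat (cx G [i, sc, n]) / of_nat (cw G [i, sc, n]) = ((1/2)^(i+1) * max 0 x :: rat)"
proof -
  obtain a b where ab: "quotient_of x = (a, b)" by force
  have b: "b > 0" using quotient_of_denom_pos[OF ab] .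
  have x: "x = of_int a / of_int b" using quotient_of_div[OF ab] .
  have cw: "cw G [i, sc, n] = nat b * 2 ^ (i+1)"
    using prod_decode_rat_code[of x] by (simp add: cw_def hG ab)
  have cx: "cx G [i, sc, n] = nat (max 0 a)"
    using prod_decode_rat_code[of x] by (simp add: cx_def hG ab xp_int_encode)
  have "max 0 x = of_int (max 0 a) / of_int b" using b
    by (auto simp: x max_def divide_nonneg_pos field_simps)
  then show ?thesis using b
    by (simp add: cw cx field_simps power_divide)
qed

lemma frac_add: "(M::nat) > 0 \<Longrightarrow> w > 0 \<Longrightarrow> (of_nat (N*w + x*M) :: rat) / of_nat (M*w) = of_nat N / of_nat M + of_nat x / of_nat w"
  by (simp add: field_simps)

lemma cMN:
  assumes hG: "\<And>i. G [i, sc, n] = rat_code (Q i)"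
  shows "cM G [k, sc, n] > 0 \<and> of_nat (cN G [k, sc, n]) / of_nat (cM G [k, sc, n]) = (\<Sum>i<k. (1/2)^(i+1) * max 0 (Q i) :: rat)"
proof (induction k)
  case 0 then show ?case by (simp add: cM_def cN_def)
next
  case (Suc k)
  have M: "cM G [Suc k, sc, n] = cM G [k, sc, n] * cw G [k, sc, n]" by (simp add: cM_def)
  have N: "cN G [Suc k, sc, n] = cN G [k, sc, n] * cw G [k, sc, n] + cx G [k, sc, n] * cM G [k, sc, n]"
    by (simp add: cN_def)
  have w: "cw G [k, sc, n] > 0 \<and> of_nat (cx G [k, sc, n]) / of_nat (cw G [k, sc, n]) = ((1/2)^(k+1) * max 0 (Q k) :: rat)"
    by (rule cw_cx, rule hG)
  have "(of_nat (cN G [Suc k, sc, n]) :: rat) / of_nat (cM G [Suc k, sc, n])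
      = of_nat (cN G [k, sc, n]) / of_nat (cM G [k, sc, n]) + of_nat (cx G [k, sc, n]) / of_nat (cw G [k, sc, n])"
    using Suc.IH w unfolding M N by (intro frac_add) auto
  then show ?case using Suc.IH w M by simp
qed

lemma cfin_correct:
  assumes hG: "\<And>i. G [i, sc, n] = rat_code (Q i)"
  shows "cfin G [sc, n] = rat_code (\<Sum>i<n. (1/2)^(i+1) * max 0 (Q i))"
proof -
  have c: "cM G [n, sc, n] > 0 \<and> of_nat (cN G [n, sc, n]) / of_nat (cM G [n, sc, n]) = (\<Sum>i<n. (1/2)^(i+1) * max 0 (Q i) :: rat)"
    by (rule cMN, rule hG)
  show ?thesis using c code2_correct[of "cM G [n, sc, n]" "cN G [n, sc, n]"] by (simp add: cfin_def)
qed



lemma upper_exp_ge: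
  assumes "I = {a..b}" "0 \<le> a" "b \<le> 1" "p \<in> I"
  shows "p * f True + (1 - p) * f False \<le> upper_exp I f"
  unfolding upper_exp_def
proof (rule cSUP_upper[OF assms(4)])
  have "p * f True + (1 - p) * f False \<le> \<bar>f True\<bar> + \<bar>f False\<bar>" if "p \<in> I" for p
  proof -
    have p: "0 \<le> p" "p \<le> 1" using that assms by auto
    have "p * f True \<le> p * \<bar>f True\<bar>" using p by (intro mult_left_mono) auto
    moreover have "p * \<bar>f True\<bar> \<le> \<bar>f True\<bar>" using p by (intro mult_left_le_one_le) auto
    moreover have "(1 - p) * f False \<le> (1 - p) * \<bar>f False\<bar>" using p by (intro mult_left_mono) auto
    moreover have "(1 - p) * \<bar>f False\<bar> \<le> \<bar>f False\<bar>" using p by (intro mult_left_le_one_le) auto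
    ultimately show ?thesis by linarith
  qed
  then show "bdd_above ((\<lambda>p. p * f True + (1 - p) * f False) ` I)"
    by (intro bdd_aboveI2) blast
qed

lemma gen_snoc: "gen D (s @ [x]) = gen D s * D s x"
proof -
  have "gen D (s @ [x]) = (\<Prod>k<length s. D (take k (s@[x])) ((s@[x]) ! k)) * D s x"
    by (simp add: gen_def)
  also have "(\<Prod>k<length s. D (take k (s@[x])) ((s@[x]) ! k)) = gen D s"
    unfolding gen_def by (rule prod.cong) (auto simp: nth_append)
  finally show ?thesis .
qed

lemma gen_Nil: "gen D [] = 1" by (simp add: gen_def)

lemma gen_bound:
  assumes "\<And>s x. D s x \<ge> 0" "\<And>s x. D s x \<le> K"
  shows "0 \<le> gen D s \<and> gen D s \<le> K ^ length s"
proof (induction s rule: rev_induct)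
  case Nil then show ?case by (simp add: gen_Nil)
next
  case (snoc x s)
  have K: "0 \<le> K" using assms(1)[of "[]" True] assms(2)[of "[]" True] by linarith
  have "gen D s * D s x \<le> K ^ length s * K"
    using snoc assms(1)[of s x] assms(2)[of s x] K by (intro mult_mono) auto
  then show ?case using snoc assms(1)[of s x] by (simp add: gen_snoc mult.commute)
qed

theorem lemma5:
  fixes I :: "real set" and D :: "nat \<Rightarrow> bool list \<Rightarrow> bool \<Rightarrow> real"
    and q :: "nat \<Rightarrow> bool list \<Rightarrow> nat \<Rightarrow> rat"
  assumes "interval_forecast I" and "I \<subseteq> {0<..<1}"
    and "\<And>i s x. D i s x \<ge> 0"
    and "\<And>i. supermartingale_multiplier I (D i)"
    and "\<And>i. test_supermartingale I (gen (D i))"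
    and "recursive_NSN_Q q"
    and "\<And>i s n. q i s (Suc n) \<ge> q i s n"
    and "\<And>i s. (\<lambda>n. real_of_rat (q i s n)) \<longlonglongrightarrow> gen (D i) s"
  shows "test_supermartingale I (\<lambda>s. \<Sum>i. (1/2) ^ (i+1) * gen (D i) s)
         \<and> lower_semicomputable (\<lambda>s. \<Sum>i. (1/2) ^ (i+1) * gen (D i) s)"
proof -
  obtain a b where ab: "a \<le> b" "0 \<le> a" "b \<le> 1" "I = {a..b}"
    using assms(1) unfolding interval_forecast_def by blast
  have aI: "a \<in> I" using ab by auto
  then have a01: "0 < a" "a < 1" using assms(2) by auto
  define K where "K = 1/a + 1/(1-a)"
  have Dle: "D i s x \<le> K" for i s x
  proof -
    have "a * D i s True + (1 - a) * D i s False \<le> upper_exp I (D i s)"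
      by (rule upper_exp_ge[OF ab(4) ab(2) ab(3) aI])
    also have "\<dots> \<le> 1" using assms(4)[of i] by (simp add: supermartingale_multiplier_def)
    finally have h: "a * D i s True + (1 - a) * D i s False \<le> 1" .
    have n1: "0 \<le> D i s True" "0 \<le> D i s False" using assms(3) by auto
    have "a * D i s True \<le> 1" "(1 - a) * D i s False \<le> 1"
      using h n1 a01 mult_nonneg_nonneg[of a "D i s True"] mult_nonneg_nonneg[of "1-a" "D i s False"] by linarith+
    then have "D i s True \<le> 1/a" "D i s False \<le> 1/(1-a)"
      using a01 by (simp_all add: field_simps)
    moreover have "0 \<le> 1/a" "0 \<le> 1/(1-a)" using a01 by auto
    ultimately have "D i s True \<le> K" "D i s False \<le> K" unfolding K_def by linarith+
    then show ?thesis by (cases x) auto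
  qed
  have gb: "0 \<le> gen (D i) s \<and> gen (D i) s \<le> K ^ length s" for i s
    by (rule gen_bound) (use assms(3) Dle in auto)
  define c :: "nat \<Rightarrow> real" where "c i = (1/2) ^ (i+1)" for i
  have c0: "0 \<le> c i" for i by (simp add: c_def)
  have csum: "c sums 1" unfolding c_def using power_half_series by simp
  have summ: "summable (\<lambda>i. c i * gen (D i) s)" for s
  proof (rule summable_comparison_test'[where g = "\<lambda>i. c i * K ^ length s"])
    show "summable (\<lambda>i. c i * K ^ length s)"
      using csum by (intro summable_mult2) (auto simp: sums_iff)
    fix i show "norm (c i * gen (D i) s) \<le> c i * K ^ length s"
      using gb[of i s] c0[of i] by (auto intro: mult_left_mono)
  qed
  define T where "T s = (\<Sum>i. c i * gen (D i) s)" for s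
  have Teq: "(\<lambda>s. \<Sum>i. (1/2) ^ (i+1) * gen (D i) s) = T"
    by (rule HOL.ext) (simp only: T_def c_def)
  have Tsums: "(\<lambda>i. c i * gen (D i) s) sums T s" for s
    unfolding T_def using summ by (rule summable_sums)
  have test: "test_supermartingale I T"
    unfolding test_supermartingale_def
  proof (intro conjI allI)
    fix s show "0 \<le> T s" unfolding T_def
      using summ gb c0 by (intro suminf_nonneg) auto
  next
    show "T [] = 1" using csum unfolding T_def by (simp add: gen_Nil sums_iff)
  next
    fix s
    show "upper_exp I (\<lambda>x. T (s @ [x]) - T s) \<le> 0"
      unfolding upper_exp_def
    proof (rule cSUP_least)
      show "I \<noteq> {}" using aI by auto
      fix p assume p: "p \<in> I"
      let ?t = "\<lambda>i. c i * (p * (gen (D i) (s @ [True]) - gen (D i) s) + (1 - p) * (gen (D i) (s @ [False]) - gen (D i) s))"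
      have "?t sums (p * (T (s @ [True]) - T s) + (1 - p) * (T (s @ [False]) - T s))"
      proof -
        have "(\<lambda>i. p * (c i * gen (D i) (s @ [True]) - c i * gen (D i) s) + (1 - p) * (c i * gen (D i) (s @ [False]) - c i * gen (D i) s))
              sums (p * (T (s @ [True]) - T s) + (1 - p) * (T (s @ [False]) - T s))"
          by (intro sums_add sums_mult sums_diff Tsums)
        then show ?thesis by (simp add: algebra_simps)
      qed
      moreover have "?t i \<le> 0" for i
      proof -
        have "p * (gen (D i) (s @ [True]) - gen (D i) s) + (1 - p) * (gen (D i) (s @ [False]) - gen (D i) s)
              \<le> upper_exp I (\<lambda>x. gen (D i) (s @ [x]) - gen (D i) s)"
          using upper_exp_ge[OF ab(4) ab(2) ab(3) p, of "\<lambda>x. gen (D i) (s @ [x]) - gen (D i) s"] by simp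
        also have "\<dots> \<le> 0" using assms(5)[of i] by (simp add: test_supermartingale_def)
        finally show ?thesis using c0[of i] by (simp add: mult_nonneg_nonpos)
      qed
      ultimately show "p * (T (s @ [True]) - T s) + (1 - p) * (T (s @ [False]) - T s) \<le> 0"
        using sums_le[of ?t "\<lambda>_. 0"] by fastforce
    qed
  qed
  define r where "r s n = (\<Sum>i<n. (1/2)^(i+1) * max 0 (q i s n))" for s n
  have rec: "recursive_SN_Q r"
  proof -
    obtain G where G: "rec_fn 3 G" "\<And>i s n. G [i, str_code s, n] = rat_code (q i s n)"
      using assms(6) unfolding recursive_NSN_Q_def by blast
    show ?thesis unfolding recursive_SN_Q_def
    proof (intro exI conjI allI)
      show "rec_fn 2 (cfin G)" by (rule rf_cfin[OF G(1)])
      fix s n show "cfin G [str_code s, n] = rat_code (r s n)"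
        unfolding r_def by (rule cfin_correct) (rule G(2))
    qed
  qed
  have rmono: "r s n \<le> r s (Suc n)" for s n
  proof -
    have "r s n \<le> (\<Sum>i<n. (1/2)^(i+1) * max 0 (q i s (Suc n)))"
      unfolding r_def by (intro sum_mono mult_left_mono max.mono order_refl assms(7)) auto
    also have "\<dots> \<le> r s (Suc n)" unfolding r_def by simp
    finally show ?thesis .
  qed
  have conv: "(\<lambda>n. real_of_rat (r s n)) \<longlonglongrightarrow> T s" for s
  proof -
    define qr where "qr i n = real_of_rat (q i s n)" for i n
    have ofmax: "real_of_rat (max 0 x) = max 0 (real_of_rat x)" for x :: rat
      by (cases "x \<le> 0") (auto simp: max_def of_rat_less_eq)
    define R where "R n = real_of_rat (r s n)" for n
    have Req: "R n = (\<Sum>i<n. c i * max 0 (qr i n))" for n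
      by (simp add: R_def r_def c_def qr_def of_rat_sum of_rat_mult of_rat_power of_rat_divide ofmax)
    have qlim: "(\<lambda>n. qr i n) \<longlonglongrightarrow> gen (D i) s" for i
      unfolding qr_def by (rule assms(8))
    have qinc: "incseq (\<lambda>n. qr i n)" for i
      unfolding qr_def by (rule incseq_SucI) (simp add: of_rat_less_eq assms(7))
    have qle: "max 0 (qr i n) \<le> gen (D i) s" for i n
      using incseq_le[OF qinc qlim] gb[of i s] by auto
    have Rinc: "incseq R" unfolding R_def
      by (rule incseq_SucI) (simp add: of_rat_less_eq rmono)
    have Rle: "R n \<le> T s" for n
    proof -
      have "R n \<le> (\<Sum>i<n. c i * gen (D i) s)"
        unfolding Req by (intro sum_mono mult_left_mono qle c0)
      also have "\<dots> \<le> T s" unfolding T_def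
        using summ gb c0 by (intro sum_le_suminf) auto
      finally show ?thesis .
    qed
    obtain L where L: "R \<longlonglongrightarrow> L" "\<And>n. R n \<le> L"
      using incseq_convergent[OF Rinc, of "T s"] Rle by blast
    have "L \<le> T s" using L(1) Rle by (intro LIMSEQ_le_const2) auto
    moreover have "T s \<le> L" unfolding T_def
    proof (rule suminf_le_const[OF summ])
      fix m
      have lim: "(\<lambda>n. \<Sum>i<m. c i * max 0 (qr i n)) \<longlonglongrightarrow> (\<Sum>i<m. c i * max 0 (gen (D i) s))"
        by (intro tendsto_sum tendsto_mult tendsto_const tendsto_max qlim)
      have "(\<Sum>i<m. c i * max 0 (gen (D i) s)) \<le> L"
      proof (rule LIMSEQ_le_const2[OF lim], intro exI allI impI)
        fix n assume "m \<le> n"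
        then have "(\<Sum>i<m. c i * max 0 (qr i n)) \<le> R n" unfolding Req
          by (intro sum_mono2) (auto intro: mult_nonneg_nonneg c0)
        then show "(\<Sum>i<m. c i * max 0 (qr i n)) \<le> L" using L(2)[of n] by linarith
      qed
      then show "(\<Sum>i<m. c i * gen (D i) s) \<le> L" using gb by simp
    qed
    ultimately have "L = T s" by simp
    then show ?thesis using L(1) unfolding R_def by simp
  qed
  have lsc: "lower_semicomputable T"
    unfolding lower_semicomputable_def using rec rmono conv by blast
  show ?thesis unfolding Teq using test lsc by simp
qed

end
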